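(* Let $\rho$ be the automorphism of $\mathcal A_\theta^{alg}$ with $\rho\cdot U_1=U_2^{-1}$, $\rho\cdot U_2=U_1$, generating a group $\mathbb Z_4$. Let $H^0(\mathcal A_\theta^{alg},{}_{\rho}\mathcal A_\theta^{alg\ast})$ be the space of formal series $\varphi=\sum\varphi_{n,m}U_1^nU_2^m$ with $(\rho\cdot a)\varphi=\varphi a$ for all $a\in\mathcal A_\theta^{alg}$, with $\mathbb Z_4$ acting by applying $\rho$ termwise. Then $H^0(\mathcal A_\theta^{alg},{}_{\rho}\mathcal A_\theta^{alg\ast})^{\mathbb Z_4}\cong\mathbb C^2$.
   Context: Let $\theta\in\mathbb R\setminus\mathbb Q$, $\lambda=e^{2\pi i\theta}$. $\mathcal A_\theta^{alg}$ is the complex algebra of finite sums $\sum a_{n,m}U_1^nU_2^m$ with $U_1,U_2$ invertible and $U_2U_1=\lambda U_1U_2$; formal series $\sum_{(n,m)\in\mathbb Z^2}\varphi_{n,m}U_1^nU_2^m$ with arbitrary coefficients form an $\mathcal A_\theta^{alg}$-bimodule via multiplication. Termwise action: $\rho\cdot\sum\varphi_{n,m}U_1^nU_2^m=\sum\varphi_{n,m}\,\rho\cdot(U_1^nU_2^m)$. *)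

theory Defs
  imports Complex_Main
begin

(* Formal series sum phi(n,m) U1^n U2^m are represented by their coefficient
   functions int x int => complex.  Convention: U2^a U1^b = lambda^(a*b) U1^b U2^a. *)

definition lam :: "real \<Rightarrow> complex" where
  "lam \<theta> = cis (2 * pi * \<theta>)"

definition Aalg :: "(int \<times> int \<Rightarrow> complex) set" where
  "Aalg = {a. finite {k. a k \<noteq> 0}}"

definition lmult :: "real \<Rightarrow> (int \<times> int \<Rightarrow> complex) \<Rightarrow> (int \<times> int \<Rightarrow> complex) \<Rightarrow> (int \<times> int \<Rightarrow> complex)" where
  "lmult \<theta> a \<phi> = (\<lambda>(p, q). \<Sum>(n, m)\<in>{k. a k \<noteq> 0}.
      a (n, m) * \<phi> (p - n, q - m) * lam \<theta> powi (m * (p - n)))"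

definition rmult :: "real \<Rightarrow> (int \<times> int \<Rightarrow> complex) \<Rightarrow> (int \<times> int \<Rightarrow> complex) \<Rightarrow> (int \<times> int \<Rightarrow> complex)" where
  "rmult \<theta> \<phi> a = (\<lambda>(p, q). \<Sum>(n, m)\<in>{k. a k \<noteq> 0}.
      \<phi> (p - n, q - m) * a (n, m) * lam \<theta> powi ((q - m) * n))"

(* termwise action of rho: rho(U1^n U2^m) = U2^(-n) U1^m = lambda^(-n m) U1^m U2^(-n) *)
definition rho :: "real \<Rightarrow> (int \<times> int \<Rightarrow> complex) \<Rightarrow> (int \<times> int \<Rightarrow> complex)" where
  "rho \<theta> \<phi> = (\<lambda>(p, q). lam \<theta> powi (q * p) * \<phi> (- q, p))"

definition H0rho :: "real \<Rightarrow> (int \<times> int \<Rightarrow> complex) set" where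
  "H0rho \<theta> = {\<phi>. \<forall>a\<in>Aalg. lmult \<theta> (rho \<theta> a) \<phi> = rmult \<theta> \<phi> a}"

definition H0rho_inv :: "real \<Rightarrow> (int \<times> int \<Rightarrow> complex) set" where
  "H0rho_inv \<theta> = {\<phi> \<in> H0rho \<theta>. rho \<theta> \<phi> = \<phi>}"

end

theory Submission
  imports Defs
begin

lemma lam_nz: "lam \<theta> \<noteq> 0"
  by (simp add: lam_def)

lemma pw: "(L::complex) \<noteq> 0 \<Longrightarrow> A + B = C \<Longrightarrow> L powi A * L powi B = L powi C"
  by (metis power_int_add)

lemma supp_rho: "{k. rho \<theta> a k \<noteq> 0} = (\<lambda>(n,m). (m,-n)) ` {k. a k \<noteq> 0}"
proof (rule set_eqI)
  fix k :: "int \<times> int"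
  obtain x y where k: "k = (x,y)" by fastforce
  show "k \<in> {k. rho \<theta> a k \<noteq> 0} \<longleftrightarrow> k \<in> (\<lambda>(n,m). (m,-n)) ` {k. a k \<noteq> 0}"
  proof
    assume "k \<in> {k. rho \<theta> a k \<noteq> 0}"
    then have "a (-y, x) \<noteq> 0" by (simp add: k rho_def)
    then show "k \<in> (\<lambda>(n,m). (m,-n)) ` {k. a k \<noteq> 0}"
      by (auto simp: k image_iff intro!: bexI[of _ "(-y,x)"])
  next
    assume "k \<in> (\<lambda>(n,m). (m,-n)) ` {k. a k \<noteq> 0}"
    then show "k \<in> {k. rho \<theta> a k \<noteq> 0}"
      by (auto simp: k rho_def lam_nz)
  qed
qed

lemma lmult_rho:
  "lmult \<theta> (rho \<theta> a) \<phi> (p,q) = (\<Sum>(n,m)\<in>{k. a k \<noteq> 0}. a (n,m) * (\<phi> (p-m,q+n) * lam \<theta> powi (-n*p)))"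
proof -
  have inj: "inj_on (\<lambda>(n::int,m::int). (m,-n)) S" for S by (auto simp: inj_on_def)
  have "lmult \<theta> (rho \<theta> a) \<phi> (p,q) = (\<Sum>(n, m)\<in>(\<lambda>(n,m). (m,-n)) ` {k. a k \<noteq> 0}.
      rho \<theta> a (n, m) * \<phi> (p - n, q - m) * lam \<theta> powi (m * (p - n)))"
    by (simp add: lmult_def supp_rho)
  also have "\<dots> = (\<Sum>(n,m)\<in>{k. a k \<noteq> 0}. rho \<theta> a (m, -n) * \<phi> (p - m, q - -n) * lam \<theta> powi (-n * (p - m)))"
    by (subst sum.reindex[OF inj]) (simp add: case_prod_unfold)
  also have "\<dots> = (\<Sum>(n,m)\<in>{k. a k \<noteq> 0}. a (n,m) * (\<phi> (p-m,q+n) * lam \<theta> powi (-n*p)))"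
  proof (rule sum.cong, simp, clarify)
    fix n m :: int
    have e: "lam \<theta> powi (-(n*m)) * lam \<theta> powi (-(n * (p - m))) = lam \<theta> powi (-(n*p))"
      by (rule pw[OF lam_nz]) (simp add: algebra_simps)
    show "rho \<theta> a (m, -n) * \<phi> (p - m, q - -n) * lam \<theta> powi (-n * (p - m)) = a (n,m) * (\<phi> (p-m,q+n) * lam \<theta> powi (-n*p))"
      using e by (simp add: rho_def)
  qed
  finally show ?thesis .
qed

lemma rmult_eq:
  "rmult \<theta> \<phi> a (p,q) = (\<Sum>(n,m)\<in>{k. a k \<noteq> 0}. a (n,m) * (\<phi> (p-n,q-m) * lam \<theta> powi ((q-m)*n)))"
  by (simp add: rmult_def mult_ac)

definition P :: "real \<Rightarrow> (int \<times> int \<Rightarrow> complex) \<Rightarrow> bool" where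
  "P \<theta> \<phi> \<longleftrightarrow> (\<forall>n m p q. \<phi> (p-m,q+n) * lam \<theta> powi (-n*p) = \<phi> (p-n,q-m) * lam \<theta> powi ((q-m)*n))"

lemma H0rho_iff: "\<phi> \<in> H0rho \<theta> \<longleftrightarrow> P \<theta> \<phi>"
proof
  assume h: "\<phi> \<in> H0rho \<theta>"
  show "P \<theta> \<phi>" unfolding P_def
  proof (intro allI)
    fix n m p q :: int
    define a where "a = (\<lambda>k. if k = (n,m) then (1::complex) else 0)"
    have s: "{k. a k \<noteq> 0} = {(n,m)}" by (auto simp: a_def)
    then have "a \<in> Aalg" by (simp add: Aalg_def)
    with h have "lmult \<theta> (rho \<theta> a) \<phi> (p,q) = rmult \<theta> \<phi> a (p,q)" by (simp add: H0rho_def)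
    then show "\<phi> (p-m,q+n) * lam \<theta> powi (-n*p) = \<phi> (p-n,q-m) * lam \<theta> powi ((q-m)*n)"
      unfolding lmult_rho rmult_eq s by (simp add: a_def)
  qed
next
  assume h: "P \<theta> \<phi>"
  show "\<phi> \<in> H0rho \<theta>" unfolding H0rho_def
  proof (intro CollectI ballI ext)
    fix a and k :: "int \<times> int"
    obtain p q where k: "k = (p,q)" by fastforce
    show "lmult \<theta> (rho \<theta> a) \<phi> k = rmult \<theta> \<phi> a k"
      unfolding k lmult_rho rmult_eq
      by (rule sum.cong) (use h in \<open>auto simp: P_def\<close>)
  qed
qed


lemma pw2: "(L::complex) \<noteq> 0 \<Longrightarrow> A + B = C + D \<Longrightarrow> L powi A * L powi B = L powi C * L powi D"
  by (metis power_int_add)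

definition E :: "real \<Rightarrow> int \<Rightarrow> complex" where
  "E \<theta> s = (if even s then lam \<theta> powi ((s div 2)^2) else 0)"

definition Od :: "real \<Rightarrow> int \<Rightarrow> complex" where
  "Od \<theta> s = (if odd s then lam \<theta> powi ((s div 2)^2 + s div 2) else 0)"

lemma E_ev[simp]: "E \<theta> (2*j) = lam \<theta> powi (j^2)" by (simp add: E_def)
lemma E_od[simp]: "E \<theta> (2*j+1) = 0" by (simp add: E_def)
lemma Od_ev[simp]: "Od \<theta> (2*j) = 0" by (simp add: Od_def)
lemma Od_od[simp]: "Od \<theta> (2*j+1) = lam \<theta> powi (j^2 + j)"
proof -
  have "(2*j+1) div 2 = j" by simp
  then show ?thesis by (simp add: Od_def)
qed

lemma P_EO: "P \<theta> (\<lambda>(x,y). E \<theta> (x+y)) \<and> P \<theta> (\<lambda>(x,y). Od \<theta> (x+y))"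
  unfolding P_def
proof (intro conjI allI)
  fix n m p q :: int
  define s where "s = p-n+(q-m)"
  have s2: "p-m+(q+n) = s + 2*n" by (simp add: s_def)
  have "(E \<theta> (p-m+(q+n))) * lam \<theta> powi (-n*p) = (E \<theta> (p-n+(q-m))) * lam \<theta> powi ((q-m)*n) \<and>
        (Od \<theta> (p-m+(q+n))) * lam \<theta> powi (-n*p) = (Od \<theta> (p-n+(q-m))) * lam \<theta> powi ((q-m)*n)"
  proof (cases "even s")
    case True
    then obtain k where k: "s = 2*k" by blast
    have d: "p-m+(q+n) = 2*(k+n)" "p-n+(q-m) = 2*k" using s2 k s_def by simp_all
    have ex: "(k+n)^2 + -n*p = k^2 + (q-m)*n"
    proof -
      have "(k+n)^2 + -n*p - (k^2 + (q-m)*n) = n*(2*k - s)" by (simp add: s_def power2_eq_square algebra_simps)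
      then show ?thesis by (simp add: k)
    qed
    show ?thesis using pw2[OF lam_nz ex] unfolding d E_ev E_od Od_ev Od_od by simp
  next
    case False
    then obtain k where k: "s = 2*k+1" by (metis oddE)
    have d: "p-m+(q+n) = 2*(k+n)+1" "p-n+(q-m) = 2*k+1" using s2 k s_def by simp_all
    have ex: "((k+n)^2 + (k+n)) + -n*p = (k^2 + k) + (q-m)*n"
    proof -
      have "(k+n)^2 + (k+n) + -n*p - (k^2 + k + (q-m)*n) = n*(2*k + 1 - s)" by (simp add: s_def power2_eq_square algebra_simps)
      then show ?thesis by (simp add: k)
    qed
    show ?thesis using pw2[OF lam_nz ex] unfolding d E_ev E_od Od_ev Od_od by simp
  qed
  then show "(case (p-m,q+n) of (x,y) \<Rightarrow> E \<theta> (x+y)) * lam \<theta> powi (-n*p) =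
        (case (p-n,q-m) of (x,y) \<Rightarrow> E \<theta> (x+y)) * lam \<theta> powi ((q-m)*n)"
   "(case (p-m,q+n) of (x,y) \<Rightarrow> Od \<theta> (x+y)) * lam \<theta> powi (-n*p) =
        (case (p-n,q-m) of (x,y) \<Rightarrow> Od \<theta> (x+y)) * lam \<theta> powi ((q-m)*n)" by simp_all
qed


lemma rho_EO: "rho \<theta> (\<lambda>(x,y). E \<theta> (x+y)) = (\<lambda>(x,y). E \<theta> (x+y)) \<and>
               rho \<theta> (\<lambda>(x,y). Od \<theta> (x+y)) = (\<lambda>(x,y). Od \<theta> (x+y))"
proof -
  have "lam \<theta> powi (q*p) * E \<theta> (-q+p) = E \<theta> (p+q) \<and> lam \<theta> powi (q*p) * Od \<theta> (-q+p) = Od \<theta> (p+q)" for p q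
  proof (cases "even (-q+p)")
    case True
    then obtain k where k: "-q+p = 2*k" by blast
    have d: "-q+p = 2*k" "p+q = 2*(k+q)" using k by simp_all
    have ex: "q*p + k^2 = (k+q)^2"
    proof -
      have "(k+q)^2 - (q*p + k^2) = q*(2*k - (-q+p))" by (simp add: power2_eq_square algebra_simps)
      then show ?thesis using k by simp
    qed
    show ?thesis using pw[OF lam_nz ex] unfolding d E_ev E_od Od_ev Od_od by simp
  next
    case False
    then obtain k where k: "-q+p = 2*k+1" by (metis oddE)
    have d: "-q+p = 2*k+1" "p+q = 2*(k+q)+1" using k by simp_all
    have ex: "q*p + (k^2+k) = (k+q)^2 + (k+q)"
    proof -
      have "(k+q)^2 + (k+q) - (q*p + (k^2+k)) = q*(2*k + 1 - (-q+p))" by (simp add: power2_eq_square algebra_simps)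
      then show ?thesis using k by simp
    qed
    show ?thesis using pw[OF lam_nz ex] unfolding d E_ev E_od Od_ev Od_od by simp
  qed
  then show ?thesis by (auto simp: rho_def fun_eq_iff)
qed

lemma P_D: "P \<theta> \<phi> \<Longrightarrow> \<phi> (p-m,q+n) * lam \<theta> powi (-n*p) = \<phi> (p-n,q-m) * lam \<theta> powi ((q-m)*n)"
  by (simp add: P_def)

lemma span:
  assumes h: "P \<theta> \<phi>"
  shows "\<phi> = (\<lambda>k. \<phi> (0,0) * (case k of (x,y) \<Rightarrow> E \<theta> (x+y)) + \<phi> (1,0) * (case k of (x,y) \<Rightarrow> Od \<theta> (x+y)))"
proof -
  let ?L = "lam \<theta>"
  have h0: "\<phi> (x,y) = \<phi> (x+y,0)" for x y
    using P_D[OF h, where n=0 and m=y and p="x+y" and q=y] by simp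
  define \<psi> where "\<psi> s = \<phi> (s,0)" for s
  have r: "\<psi> (s+2) * ?L powi (-(s+1)) = \<psi> s" for s
  proof -
    have "\<phi> (s+1, 1) * ?L powi (-1*(s+1)) = \<phi> (s+1-1,0-0) * ?L powi ((0-0)*1)"
      using P_D[OF h, where n=1 and m=0 and p="s+1" and q=0] by simp
    moreover have "\<phi> (s+1,1) = \<psi> (s+2)" using h0[of "s+1" 1] by (simp add: \<psi>_def add.assoc)
    ultimately show ?thesis by (simp add: \<psi>_def)
  qed
  have r1: "\<psi> (s+2) = ?L powi (s+1) * \<psi> s" for s
  proof -
    have "?L powi (s+1) * ?L powi (-(s+1)) = 1" using pw[OF lam_nz, of "s+1" "-(s+1)" 0] by simp
    then have "\<psi> (s+2) = \<psi> (s+2) * (?L powi (s+1) * ?L powi (-(s+1)))" by simp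
    also have "\<dots> = (\<psi> (s+2) * ?L powi (-(s+1))) * ?L powi (s+1)" by (simp only: mult_ac)
    also have "\<dots> = ?L powi (s+1) * \<psi> s" by (simp only: r mult.commute)
    finally show ?thesis .
  qed
  have r2: "\<psi> s = ?L powi (-(s+1)) * \<psi> (s+2)" for s using r[of s] by (simp add: mult.commute)
  have ev: "\<psi> (2*k) = ?L powi (k^2) * \<psi> 0" for k
  proof (induct k rule: int_induct[where k=0])
    case base then show ?case by simp
  next
    case (step1 i)
    have "\<psi> (2*(i+1)) = \<psi> (2*i+2)" by (simp add: algebra_simps)
    also have "\<dots> = ?L powi (2*i+1) * (?L powi (i^2) * \<psi> 0)" using r1[of "2*i"] step1(2) by simp
    also have "\<dots> = ?L powi ((i+1)^2) * \<psi> 0"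
      proof -
        have ex: "(2*i+1) + (i^2) = (i+1)^2" by (simp add: power2_eq_square algebra_simps)
        show ?thesis by (subst mult.assoc[symmetric]) (simp only: pw[OF lam_nz ex])
      qed
    finally show ?case .
  next
    case (step2 i)
    have "\<psi> (2*(i-1)) = ?L powi (-(2*(i-1)+1)) * \<psi> (2*(i-1)+2)" by (rule r2)
    also have "2*(i-1)+2 = 2*i" by simp
    also have "?L powi (-(2*(i-1)+1)) * \<psi> (2*i) = ?L powi (-(2*(i-1)+1)) * (?L powi (i^2) * \<psi> 0)" using step2(2) by simp
    also have "\<dots> = ?L powi ((i-1)^2) * \<psi> 0"
      proof -
        have ex: "(-(2*(i-1)+1)) + (i^2) = (i-1)^2" by (simp add: power2_eq_square algebra_simps)
        show ?thesis by (subst mult.assoc[symmetric]) (simp only: pw[OF lam_nz ex])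
      qed
    finally show ?case .
  qed
  have od: "\<psi> (2*k+1) = ?L powi (k^2+k) * \<psi> 1" for k
  proof (induct k rule: int_induct[where k=0])
    case base then show ?case by simp
  next
    case (step1 i)
    have "\<psi> (2*(i+1)+1) = \<psi> ((2*i+1)+2)" by (simp add: algebra_simps)
    also have "\<dots> = ?L powi (2*i+1+1) * (?L powi (i^2+i) * \<psi> 1)" using r1[of "2*i+1"] step1(2) by simp
    also have "\<dots> = ?L powi ((i+1)^2+(i+1)) * \<psi> 1"
      proof -
        have ex: "(2*i+1+1) + (i^2+i) = (i+1)^2+(i+1)" by (simp add: power2_eq_square algebra_simps)
        show ?thesis by (subst mult.assoc[symmetric]) (simp only: pw[OF lam_nz ex])
      qed
    finally show ?case .
  next
    case (step2 i)
    have "\<psi> (2*(i-1)+1) = ?L powi (-(2*(i-1)+1+1)) * \<psi> (2*(i-1)+1+2)" by (rule r2)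
    also have "2*(i-1)+1+2 = 2*i+1" by simp
    also have "?L powi (-(2*(i-1)+1+1)) * \<psi> (2*i+1) = ?L powi (-(2*(i-1)+1+1)) * (?L powi (i^2+i) * \<psi> 1)" using step2(2) by simp
    also have "\<dots> = ?L powi ((i-1)^2+(i-1)) * \<psi> 1"
      proof -
        have ex: "(-(2*(i-1)+1+1)) + (i^2+i) = (i-1)^2+(i-1)" by (simp add: power2_eq_square algebra_simps)
        show ?thesis by (subst mult.assoc[symmetric]) (simp only: pw[OF lam_nz ex])
      qed
    finally show ?case .
  qed
  show ?thesis
  proof (rule ext, clarify)
    fix x y :: int
    have "\<phi> (x,y) = \<psi> (x+y)" unfolding \<psi>_def by (rule h0)
    moreover have "\<phi> (0,0) = \<psi> 0" "\<phi> (1,0) = \<psi> 1" by (simp_all add: \<psi>_def)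
    ultimately show "\<phi> (x,y) = \<phi> (0,0) * E \<theta> (x+y) + \<phi> (1,0) * Od \<theta> (x+y)"
    proof (cases "even (x+y)")
      case True
      then obtain k where k: "x+y = 2*k" by blast
      show ?thesis unfolding \<open>\<phi> (x,y) = \<psi> (x+y)\<close> \<open>\<phi> (0,0) = \<psi> 0\<close> \<open>\<phi> (1,0) = \<psi> 1\<close> k E_ev Od_ev ev
        by (simp add: mult.commute)
    next
      case False
      then obtain k where k: "x+y = 2*k+1" by (metis oddE)
      show ?thesis unfolding \<open>\<phi> (x,y) = \<psi> (x+y)\<close> \<open>\<phi> (0,0) = \<psi> 0\<close> \<open>\<phi> (1,0) = \<psi> 1\<close> k E_od Od_od od
        by (simp add: mult.commute)
    qed
  qed
qed


lemma lin_aux: "(a1::complex)*X = b1*Y \<Longrightarrow> a2*X = b2*Y \<Longrightarrow> (c*a1+d*a2)*X = (c*b1+d*b2)*Y"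
  by (simp add: distrib_right mult.assoc)

lemma lin_aux2: "(X::complex)*a1 = b1 \<Longrightarrow> X*a2 = b2 \<Longrightarrow> X*(c*a1+d*a2) = c*b1+d*b2"
  by (metis distrib_left mult.left_commute)

lemma E0: "E \<theta> 0 = 1" "E \<theta> 1 = 0" "Od \<theta> 0 = 0" "Od \<theta> 1 = 1"
  by (simp_all add: E_def Od_def)

theorem mainTheorem6:
  fixes \<theta> :: real
  assumes "\<theta> \<notin> \<rat>"
  shows "\<exists>\<phi>1 \<phi>2.
           (\<forall>c d :: complex. (\<lambda>k. c * \<phi>1 k + d * \<phi>2 k) \<in> H0rho_inv \<theta>) \<and>
           (\<forall>\<phi>\<in>H0rho_inv \<theta>. \<exists>!(c, d). \<phi> = (\<lambda>k. c * \<phi>1 k + d * \<phi>2 k))"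
proof (intro exI conjI allI ballI)
  let ?f1 = "\<lambda>(x,y). E \<theta> (x+y)"
  let ?f2 = "\<lambda>(x,y). Od \<theta> (x+y)"
  fix c d :: complex
  have p1: "P \<theta> ?f1" and p2: "P \<theta> ?f2" using P_EO by auto
  have "P \<theta> (\<lambda>k. c * ?f1 k + d * ?f2 k)"
    unfolding P_def by (intro allI lin_aux P_D[OF p1] P_D[OF p2])
  moreover have "rho \<theta> (\<lambda>k. c * ?f1 k + d * ?f2 k) = (\<lambda>k. c * ?f1 k + d * ?f2 k)"
  proof (rule ext)
    fix k :: "int \<times> int"
    obtain p q where k: "k = (p,q)" by fastforce
    have r1: "lam \<theta> powi (q*p) * ?f1 (-q,p) = ?f1 (p,q)"
      using fun_cong[OF conjunct1[OF rho_EO], of \<theta> "(p,q)"] by (simp add: rho_def)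
    have r2: "lam \<theta> powi (q*p) * ?f2 (-q,p) = ?f2 (p,q)"
      using fun_cong[OF conjunct2[OF rho_EO], of \<theta> "(p,q)"] by (simp add: rho_def)
    show "rho \<theta> (\<lambda>k. c * ?f1 k + d * ?f2 k) k = c * ?f1 k + d * ?f2 k"
      unfolding rho_def k using lin_aux2[OF r1 r2] by simp
  qed
  ultimately show "(\<lambda>k. c * ?f1 k + d * ?f2 k) \<in> H0rho_inv \<theta>"
    by (simp add: H0rho_inv_def H0rho_iff)
next
  fix \<phi> assume "\<phi> \<in> H0rho_inv \<theta>"
  then have h: "P \<theta> \<phi>" by (simp add: H0rho_inv_def H0rho_iff)
  show "\<exists>!(c, d). \<phi> = (\<lambda>k. c * (\<lambda>(x,y). E \<theta> (x+y)) k + d * (\<lambda>(x,y). Od \<theta> (x+y)) k)"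
  proof (rule ex1I[of _ "(\<phi> (0,0), \<phi> (1,0))"])
    show "case (\<phi> (0,0), \<phi> (1,0)) of (c, d) \<Rightarrow> \<phi> = (\<lambda>k. c * (\<lambda>(x,y). E \<theta> (x+y)) k + d * (\<lambda>(x,y). Od \<theta> (x+y)) k)"
      using span[OF h] by simp
  next
    fix z assume z: "case z of (c, d) \<Rightarrow> \<phi> = (\<lambda>k. c * (\<lambda>(x,y). E \<theta> (x+y)) k + d * (\<lambda>(x,y). Od \<theta> (x+y)) k)"
    obtain c d where zc: "z = (c,d)" by fastforce
    with z have e: "\<phi> = (\<lambda>k. c * (\<lambda>(x,y). E \<theta> (x+y)) k + d * (\<lambda>(x,y). Od \<theta> (x+y)) k)" by simp
    have "\<phi> (0,0) = c" "\<phi> (1,0) = d" by (simp_all add: e E0)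
    then show "z = (\<phi> (0,0), \<phi> (1,0))" by (simp add: zc)
  qed
qed

end
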